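(* Fix $k\in\mathbb{N}$. Suppose $M$ is a matroid that is nearly finitary but not $n$-nearly finitary for any $n\in\mathbb{N}$. Then $M[k]$ is nearly finitary but not $n$-nearly finitary for any $n\in\mathbb{N}$.
   Context: Matroids (possibly infinite): $\emptyset$ independent; subsets of independent sets independent; if $B$ is maximal independent and $A$ non-maximal independent, then $A\cup\{b\}$ is independent for some $b\in B\setminus A$; for independent $A\subseteq X\subseteq E$ there is a maximal independent $S$ with $A\subseteq S\subseteq X$. Bases are maximal independent sets; the rank is the cardinality of a base (infinite cardinalities identified). For a matroid $M=(E,\mathcal{L})$ of rank at least $k$, $M[k]=(E,\mathcal{L}[k])$ with $\mathcal{L}[k]=\{S\in\mathcal{L}:\exists T\in\mathcal{L},\ T\supseteq S,\ |T\setminus S|=k\}$, which is a matroid. The finitarization $M^{\mathrm{fin}}$ has as independent sets those sets all of whose finite subsets are independent in $M$. $M$ is nearly finitary if $F\setminus B$ is finite whenever a base $F$ of $M^{\mathrm{fin}}$ contains a base $B$ of $M$; $n$-nearly finitary if $|F\setminus B|\le n$ for all such pairs. *)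

theory Defs
  imports Main
begin

definition maximal_in :: "'a set set \<Rightarrow> 'a set \<Rightarrow> bool" where
  "maximal_in \<I> S \<longleftrightarrow> S \<in> \<I> \<and> (\<forall>T\<in>\<I>. S \<subseteq> T \<longrightarrow> T = S)"

definition matroid :: "'a set \<Rightarrow> 'a set set \<Rightarrow> bool" where
  "matroid E \<I> \<longleftrightarrow>
     (\<forall>S\<in>\<I>. S \<subseteq> E) \<and>
     {} \<in> \<I> \<and>
     (\<forall>S T. T \<in> \<I> \<longrightarrow> S \<subseteq> T \<longrightarrow> S \<in> \<I>) \<and>
     (\<forall>A B. maximal_in \<I> B \<longrightarrow> A \<in> \<I> \<longrightarrow> \<not> maximal_in \<I> A \<longrightarrow>
        (\<exists>b\<in>B - A. insert b A \<in> \<I>)) \<and>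
     (\<forall>A X. A \<in> \<I> \<longrightarrow> A \<subseteq> X \<longrightarrow> X \<subseteq> E \<longrightarrow>
        (\<exists>S. A \<subseteq> S \<and> S \<subseteq> X \<and> maximal_in {I \<in> \<I>. I \<subseteq> X} S))"

abbreviation basis :: "'a set set \<Rightarrow> 'a set \<Rightarrow> bool" where
  "basis \<I> B \<equiv> maximal_in \<I> B"

definition fin_indep :: "'a set \<Rightarrow> 'a set set \<Rightarrow> 'a set set" where
  "fin_indep E \<I> = {S. S \<subseteq> E \<and> (\<forall>F. F \<subseteq> S \<longrightarrow> finite F \<longrightarrow> F \<in> \<I>)}"

definition nearly_finitary :: "'a set \<Rightarrow> 'a set set \<Rightarrow> bool" where
  "nearly_finitary E \<I> \<longleftrightarrow>
     (\<forall>F B. basis (fin_indep E \<I>) F \<longrightarrow> basis \<I> B \<longrightarrow> B \<subseteq> F \<longrightarrow> finite (F - B))"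

definition n_nearly_finitary :: "nat \<Rightarrow> 'a set \<Rightarrow> 'a set set \<Rightarrow> bool" where
  "n_nearly_finitary n E \<I> \<longleftrightarrow>
     (\<forall>F B. basis (fin_indep E \<I>) F \<longrightarrow> basis \<I> B \<longrightarrow> B \<subseteq> F \<longrightarrow>
        finite (F - B) \<and> card (F - B) \<le> n)"

definition trunc :: "nat \<Rightarrow> 'a set set \<Rightarrow> 'a set set" where
  "trunc k \<I> = {S \<in> \<I>. \<exists>T\<in>\<I>. S \<subseteq> T \<and> finite (T - S) \<and> card (T - S) = k}"

end

theory Submission
  imports Defs
begin

lemma maxD1: "maximal_in A S \<Longrightarrow> S \<in> A"
  unfolding maximal_in_def by simp
lemma maxD2: "maximal_in A S \<Longrightarrow> T \<in> A \<Longrightarrow> S \<subseteq> T \<Longrightarrow> T = S"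
  unfolding maximal_in_def by simp
lemma maxR1: "maximal_in {J \<in> I. J \<subseteq> X} S \<Longrightarrow> S \<in> I"
  unfolding maximal_in_def by simp
lemma maxR2: "maximal_in {J \<in> I. J \<subseteq> X} S \<Longrightarrow> S \<subseteq> X"
  unfolding maximal_in_def by simp
lemma maxR3: "maximal_in {J \<in> I. J \<subseteq> X} S \<Longrightarrow> T \<in> I \<Longrightarrow> T \<subseteq> X \<Longrightarrow> S \<subseteq> T \<Longrightarrow> T = S"
  unfolding maximal_in_def by simp

lemma matroidD1: "matroid E I \<Longrightarrow> (\<forall>S\<in>I. S \<subseteq> E)"
  unfolding matroid_def by (elim conjE) assumption
lemma matroidD2: "matroid E I \<Longrightarrow> {} \<in> I"
  unfolding matroid_def by (elim conjE) assumption
lemma matroidD3: "matroid E I \<Longrightarrow> \<forall>S T. T \<in> I \<longrightarrow> S \<subseteq> T \<longrightarrow> S \<in> I"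
  unfolding matroid_def by (elim conjE) assumption
lemma matroidD4: "matroid E I \<Longrightarrow> \<forall>A B. maximal_in I B \<longrightarrow> A \<in> I \<longrightarrow> \<not> maximal_in I A \<longrightarrow> (\<exists>b\<in>B - A. insert b A \<in> I)"
  unfolding matroid_def by (elim conjE) assumption
lemma matroidD5: "matroid E I \<Longrightarrow> \<forall>A X. A \<in> I \<longrightarrow> A \<subseteq> X \<longrightarrow> X \<subseteq> E \<longrightarrow> (\<exists>S. A \<subseteq> S \<and> S \<subseteq> X \<and> maximal_in {J \<in> I. J \<subseteq> X} S)"
  unfolding matroid_def by (elim conjE) assumption

lemma m_sub: "matroid E I \<Longrightarrow> S \<in> I \<Longrightarrow> S \<subseteq> E"
  using matroidD1[of E I] by blast
lemma m_down: "matroid E I \<Longrightarrow> T \<in> I \<Longrightarrow> S \<subseteq> T \<Longrightarrow> S \<in> I"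
  using matroidD3[of E I] by blast
lemma m_empty: "matroid E I \<Longrightarrow> {} \<in> I"
  using matroidD2[of E I] by blast
lemma m_aug: "matroid E I \<Longrightarrow> maximal_in I B \<Longrightarrow> A \<in> I \<Longrightarrow> \<not> maximal_in I A \<Longrightarrow>
   \<exists>b\<in>B - A. insert b A \<in> I"
  using matroidD4[of E I] by blast
lemma m_ext: "matroid E I \<Longrightarrow> A \<in> I \<Longrightarrow> A \<subseteq> X \<Longrightarrow> X \<subseteq> E \<Longrightarrow>
   \<exists>S. A \<subseteq> S \<and> S \<subseteq> X \<and> maximal_in {J \<in> I. J \<subseteq> X} S"
  using matroidD5[of E I] by blast

lemma base_ext:
  assumes M: "matroid E I" and A: "A \<in> I"
  shows "\<exists>B. basis I B \<and> A \<subseteq> B"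
proof -
  obtain S where S: "A \<subseteq> S" "S \<subseteq> E" "maximal_in {J \<in> I. J \<subseteq> E} S"
    using m_ext[OF M A m_sub[OF M A]] by blast
  have "{J \<in> I. J \<subseteq> E} = I" using m_sub[OF M] by blast
  thus ?thesis using S by auto
qed

lemma max_super_base:
  assumes M: "matroid E I" and B': "basis I B'" and sub: "B' \<subseteq> Y"
    and J: "maximal_in {K \<in> I. K \<subseteq> Y} J"
  shows "basis I J"
proof (rule ccontr)
  assume n: "\<not> basis I J"
  have JI: "J \<in> I" "J \<subseteq> Y" using J unfolding maximal_in_def by auto
  obtain b where b: "b \<in> B' - J" "insert b J \<in> I" using m_aug[OF M B' JI(1) n] by blast
  have "insert b J \<subseteq> Y" using b sub JI by auto
  hence "insert b J = J" using J b unfolding maximal_in_def by blast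
  thus False using b by auto
qed

lemma exch_base:
  assumes M: "matroid E I" and B1: "basis I B1" and x: "x \<in> B1" and b: "b \<notin> B1"
    and ind: "insert b (B1 - {x}) \<in> I"
  shows "basis I (insert b (B1 - {x}))"
proof (rule ccontr)
  assume n: "\<not> basis I (insert b (B1 - {x}))"
  obtain c where c: "c \<in> B1 - insert b (B1 - {x})" "insert c (insert b (B1 - {x})) \<in> I"
    using m_aug[OF M B1 ind n] by blast
  have "c = x" using c by auto
  hence "insert b B1 \<in> I" using c x by (metis insert_Diff insert_commute)
  hence "insert b B1 = B1" using B1 unfolding maximal_in_def by blast
  thus False using b by auto
qed

lemma EX_aux:
  assumes M: "matroid E I"
  shows "\<forall>B1 B2. basis I B1 \<longrightarrow> basis I B2 \<longrightarrow> finite (B1 - B2) \<longrightarrow> card (B1 - B2) = n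
     \<longrightarrow> finite (B2 - B1) \<and> card (B2 - B1) \<le> n"
proof (induction n)
  case 0
  show ?case
  proof (intro allI impI)
    fix B1 B2 assume h: "basis I B1" "basis I B2" "finite (B1 - B2)" "card (B1 - B2) = 0"
    hence "B1 \<subseteq> B2" by auto
    hence "B1 = B2" using h unfolding maximal_in_def by blast
    thus "finite (B2 - B1) \<and> card (B2 - B1) \<le> 0" by simp
  qed
next
  case (Suc n)
  show ?case
  proof (intro allI impI)
    fix B1 B2 assume h: "basis I B1" "basis I B2" "finite (B1 - B2)" "card (B1 - B2) = Suc n"
    then obtain x where x: "x \<in> B1 - B2" by (metis card.empty ex_in_conv nat.distinct(1))
    have B1I: "B1 \<in> I" using h unfolding maximal_in_def by auto
    have AI: "B1 - {x} \<in> I" using m_down[OF M B1I] by blast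
    have nA: "\<not> basis I (B1 - {x})"
      using B1I x unfolding maximal_in_def by blast
    obtain b where b: "b \<in> B2 - (B1 - {x})" "insert b (B1 - {x}) \<in> I"
      using m_aug[OF M h(2) AI nA] by blast
    have bB1: "b \<notin> B1" using b x by auto
    define B3 where "B3 = insert b (B1 - {x})"
    have B3: "basis I B3" unfolding B3_def using exch_base[OF M h(1) _ bB1 b(2)] x by auto
    have e1: "B3 - B2 = (B1 - B2) - {x}" unfolding B3_def using b by auto
    have f3: "finite (B3 - B2)" "card (B3 - B2) = n" using e1 h(3,4) x by auto
    have IH: "finite (B2 - B3) \<and> card (B2 - B3) \<le> n" using Suc.IH B3 h(2) f3 by blast
    have sub: "B2 - B1 \<subseteq> insert b (B2 - B3)" unfolding B3_def using x by auto
    have fin: "finite (B2 - B1)" using IH sub finite_subset by blast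
    have "card (B2 - B1) \<le> card (insert b (B2 - B3))" using sub IH by (intro card_mono) auto
    also have "\<dots> \<le> Suc n" using IH by (simp add: card_insert_if)
    finally show "finite (B2 - B1) \<and> card (B2 - B1) \<le> Suc n" using fin by simp
  qed
qed

lemma EX:
  assumes M: "matroid E I" and "basis I B1" "basis I B2" "finite (B1 - B2)"
  shows "finite (B2 - B1) \<and> card (B2 - B1) \<le> card (B1 - B2)"
  using EX_aux[OF M] assms by blast

lemma LL:
  assumes M: "matroid E I" and B: "basis I B" and X: "X \<subseteq> B" "finite X"
    and J: "J \<in> I" "B - X \<subseteq> J"
  shows "finite (J - (B - X)) \<and> card (J - (B - X)) \<le> card X"
proof -
  obtain B2 where B2: "basis I B2" "J \<subseteq> B2" using base_ext[OF M J(1)] by blast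
  have s1: "B - B2 \<subseteq> X - J" using J B2 by auto
  have f1: "finite (B - B2)" using s1 X finite_subset by blast
  have e: "finite (B2 - B) \<and> card (B2 - B) \<le> card (B - B2)" using EX[OF M B B2(1) f1] .
  have c1: "card (B - B2) \<le> card (X - J)" using s1 X by (intro card_mono) auto
  have s2: "J - (B - X) \<subseteq> (B2 - B) \<union> (X \<inter> J)" using B2 by auto
  have fin: "finite (J - (B - X))" using s2 e X finite_subset by blast
  have "card (J - (B - X)) \<le> card ((B2 - B) \<union> (X \<inter> J))" using s2 e X by (intro card_mono) auto
  also have "\<dots> \<le> card (B2 - B) + card (X \<inter> J)" by (rule card_Un_le)
  also have "\<dots> \<le> card (X - J) + card (X \<inter> J)" using e c1 by simp
  also have "\<dots> = card X" using X
  proof -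
    have "X = (X - J) \<union> (X \<inter> J)" by blast
    hence "card X = card ((X - J) \<union> (X \<inter> J))" by simp
    also have "\<dots> = card (X - J) + card (X \<inter> J)" using X by (intro card_Un_disjoint) auto
    finally show ?thesis by simp
  qed
  finally show ?thesis using fin by simp
qed


lemma G:
  assumes M: "matroid E I" and XE: "X \<subseteq> E" and B: "maximal_in {J \<in> I. J \<subseteq> X} B"
    and B': "basis I B'" "B \<subseteq> B'" and P: "P \<in> I" "P \<subseteq> X"
  shows "\<exists>J. basis I J \<and> P \<union> (B' - B) \<subseteq> J \<and> J \<subseteq> P \<union> B'"
proof -
  have B'I: "B' \<in> I" using B' by (simp add: maxD1)
  have PE: "P \<union> B' \<subseteq> E" using m_sub[OF M P(1)] m_sub[OF M B'I] by auto
  obtain J where J: "P \<subseteq> J" "J \<subseteq> P \<union> B'" "maximal_in {K \<in> I. K \<subseteq> P \<union> B'} J"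
    using m_ext[OF M P(1) _ PE] by blast
  have bJ: "basis I J" using max_super_base[OF M B'(1) _ J(3)] by blast
  have JI: "J \<in> I" using bJ by (simp add: maxD1)
  define K where "K = B \<union> (J - P)"
  have KB': "K \<subseteq> B'" unfolding K_def using J B' by auto
  have KI: "K \<in> I" using m_down[OF M B'I KB'] .
  have BX: "B \<in> I" "B \<subseteq> X" using maxR1[OF B] maxR2[OF B] by auto
  have bK: "basis I K"
  proof (rule ccontr)
    assume n: "\<not> basis I K"
    obtain j where j: "j \<in> J - K" "insert j K \<in> I" using m_aug[OF M bJ KI n] by blast
    have jP: "j \<in> P" "j \<notin> B" using j unfolding K_def by auto
    have "insert j B \<in> I" by (rule m_down[OF M j(2)]) (auto simp: K_def)
    moreover have "insert j B \<subseteq> X" using jP P BX by auto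
    ultimately have "insert j B = B" using maxR3[OF B] by blast
    thus False using jP by auto
  qed
  have "K = B'" using maxD2[OF bK B'I KB'] by simp
  hence "B' - B \<subseteq> J" unfolding K_def by auto
  thus ?thesis using bJ J by blast
qed

lemma RA:
  assumes M: "matroid E I" and XE: "X \<subseteq> E" and B: "maximal_in {J \<in> I. J \<subseteq> X} B"
    and P: "P \<in> I" "P \<subseteq> X" and nmax: "\<not> maximal_in {J \<in> I. J \<subseteq> X} P"
  shows "\<exists>b\<in>B - P. insert b P \<in> I"
proof (rule ccontr)
  assume na: "\<not> (\<exists>b\<in>B - P. insert b P \<in> I)"
  obtain T where T: "T \<in> I" "T \<subseteq> X" "P \<subseteq> T" "T \<noteq> P"
    using nmax P unfolding maximal_in_def by auto
  obtain x where x: "x \<in> T" "x \<notin> P" using T by blast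
  have xI: "insert x P \<in> I" by (rule m_down[OF M T(1)]) (use x T in auto)
  have xX: "x \<in> X" using x T by auto
  have BX: "B \<in> I" "B \<subseteq> X" using maxR1[OF B] maxR2[OF B] by auto
  obtain B' where B': "basis I B'" "B \<subseteq> B'" using base_ext[OF M BX(1)] by blast
  have B'I: "B' \<in> I" using B' by (simp add: maxD1)
  obtain J where J: "basis I J" "P \<union> (B' - B) \<subseteq> J" "J \<subseteq> P \<union> B'"
    using G[OF M XE B B' P] by blast
  have JI: "J \<in> I" using J(1) by (simp add: maxD1)
  have JB: "J \<inter> B \<subseteq> P"
  proof
    fix b assume b: "b \<in> J \<inter> B"
    show "b \<in> P"
    proof (rule ccontr)
      assume "b \<notin> P"
      moreover have "insert b P \<in> I" by (rule m_down[OF M JI]) (use b J in auto)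
      ultimately show False using na b by blast
    qed
  qed
  have xB': "x \<notin> B' - B"
  proof
    assume xb: "x \<in> B' - B"
    have "insert x B \<in> I" by (rule m_down[OF M B'I]) (use xb B' in auto)
    moreover have "insert x B \<subseteq> X" using xX BX by auto
    ultimately have "insert x B = B" using maxR3[OF B] by blast
    thus False using xb by auto
  qed
  have xJ: "x \<notin> J" using J(3) JB x xB' by blast
  obtain J2 where J2: "basis I J2" "insert x P \<union> (B' - B) \<subseteq> J2"
    using G[OF M XE B B' xI] xX P by blast
  have "insert x J \<subseteq> J2" using J(3) JB J2(2) by blast
  hence "insert x J \<in> I" by (rule m_down[OF M maxD1[OF J2(1)]])
  hence "insert x J = J" using maxD2[OF J(1)] by blast
  thus False using xJ by auto
qed

lemma inf_bases:
  assumes M: "matroid E I" and NF: "nearly_finitary E I"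
    and NN: "\<forall>n. \<not> n_nearly_finitary n E I" and B: "basis I B"
  shows "infinite B"
proof
  assume fB: "finite B"
  obtain F B0 where h: "basis (fin_indep E I) F" "basis I B0" "B0 \<subseteq> F"
      "\<not> (finite (F - B0) \<and> card (F - B0) \<le> 0)"
  proof -
    have "\<not> n_nearly_finitary 0 E I" using NN by simp
    thus ?thesis using that unfolding n_nearly_finitary_def by blast
  qed
  have "finite (F - B0)" using NF h unfolding nearly_finitary_def by blast
  then obtain f where f: "f \<in> F" "f \<notin> B0" using h(4) by auto
  have "finite (B - B0)" using fB by auto
  hence "finite (B0 - B)" using EX[OF M B h(2)] by blast
  moreover have "B0 \<subseteq> (B0 - B) \<union> B" by blast
  ultimately have fB0: "finite B0" using fB finite_subset by blast
  have "F \<in> fin_indep E I" using maxD1[OF h(1)] .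
  hence "insert f B0 \<in> I" using f h(3) fB0 unfolding fin_indep_def by auto
  hence "insert f B0 = B0" using maxD2[OF h(2)] by blast
  thus False using f by auto
qed


lemma trunc_sub: "trunc k I \<subseteq> I"
  unfolding trunc_def by auto

lemma fin_eq:
  assumes M: "matroid E I" and inf: "\<And>B. basis I B \<Longrightarrow> infinite B"
  shows "fin_indep E (trunc k I) = fin_indep E I"
proof
  show "fin_indep E (trunc k I) \<subseteq> fin_indep E I"
    using trunc_sub unfolding fin_indep_def by blast
next
  have key: "A \<in> trunc k I" if A: "finite A" "A \<in> I" for A
  proof -
    obtain B where B: "basis I B" "A \<subseteq> B" using base_ext[OF M A(2)] by blast
    have "infinite (B - A)" using inf[OF B(1)] A(1) by simp
    then obtain Y where Y: "Y \<subseteq> B - A" "finite Y" "card Y = k"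
      using infinite_arbitrarily_large by blast
    have "A \<union> Y \<in> I" by (rule m_down[OF M maxD1[OF B(1)]]) (use Y B in auto)
    moreover have "(A \<union> Y) - A = Y" using Y by auto
    moreover have "A \<subseteq> A \<union> Y" by blast
    ultimately have "\<exists>T\<in>I. A \<subseteq> T \<and> finite (T - A) \<and> card (T - A) = k"
      using Y by metis
    thus ?thesis unfolding trunc_def using A by simp
  qed
  show "fin_indep E I \<subseteq> fin_indep E (trunc k I)"
    unfolding fin_indep_def using key by blast
qed

lemma LM:
  assumes M: "matroid E I" and B': "basis (trunc k I) B'" and J: "J \<in> I" "B' \<subseteq> J"
  shows "finite (J - B')"
proof (rule ccontr)
  assume inf: "infinite (J - B')"
  then obtain Y where Y: "Y \<subseteq> J - B'" "finite Y" "card Y = Suc k"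
    using infinite_arbitrarily_large by blast
  then obtain y where y: "y \<in> Y" by (metis card.empty ex_in_conv nat.distinct(1))
  have I1: "insert y B' \<in> I" by (rule m_down[OF M J(1)]) (use J y Y in auto)
  have I2: "B' \<union> Y \<in> I" by (rule m_down[OF M J(1)]) (use J Y in auto)
  have e: "(B' \<union> Y) - insert y B' = Y - {y}" using Y by auto
  have c: "finite (Y - {y})" "card (Y - {y}) = k" using Y y by auto
  have sub: "insert y B' \<subseteq> B' \<union> Y" using y by auto
  have ex: "\<exists>T\<in>I. insert y B' \<subseteq> T \<and> finite (T - insert y B') \<and> card (T - insert y B') = k"
  proof (rule bexI[of _ "B' \<union> Y"])
    show "insert y B' \<subseteq> B' \<union> Y \<and> finite (B' \<union> Y - insert y B') \<and> card (B' \<union> Y - insert y B') = k"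
      unfolding e using sub c by simp
  qed (rule I2)
  have "insert y B' \<in> trunc k I" unfolding trunc_def using I1 ex by simp
  hence "insert y B' = B'" using maxD2[OF B'] by blast
  thus False using y Y by auto
qed


lemma goal1:
  assumes M: "matroid E I" and NF: "nearly_finitary E I"
    and inf: "\<And>B. basis I B \<Longrightarrow> infinite B"
  shows "nearly_finitary E (trunc k I)"
  unfolding nearly_finitary_def
proof (intro allI impI)
  fix F B'
  assume hF0: "basis (fin_indep E (trunc k I)) F" and hB: "basis (trunc k I) B'" and sub: "B' \<subseteq> F"
  have hF: "basis (fin_indep E I) F" using hF0 fin_eq[OF M inf] by simp
  have FI: "F \<in> fin_indep E I" using maxD1[OF hF] .
  have FE: "F \<subseteq> E" using FI unfolding fin_indep_def by simp
  have B'I: "B' \<in> I" using maxD1[OF hB] trunc_sub by blast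
  obtain S where S: "B' \<subseteq> S" "S \<subseteq> F" and Smax: "maximal_in {J \<in> I. J \<subseteq> F} S"
    using m_ext[OF M B'I sub FE] by blast
  have SI: "S \<in> I" using maxR1[OF Smax] .
  have bS: "basis I S"
  proof (rule ccontr)
    assume n: "\<not> basis I S"
    obtain B0 where B0: "basis I B0" using base_ext[OF M m_empty[OF M]] by blast
    obtain b where b: "b \<in> B0 - S" "insert b S \<in> I" using m_aug[OF M B0 SI n] by blast
    have bE: "b \<in> E" using m_sub[OF M maxD1[OF B0]] b by blast
    have bF: "b \<notin> F"
    proof
      assume "b \<in> F"
      hence "insert b S \<subseteq> F" using S by blast
      hence "insert b S = S" using maxR3[OF Smax b(2)] by blast
      thus False using b by blast
    qed
    have notfin: "insert b F \<notin> fin_indep E I"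
    proof
      assume "insert b F \<in> fin_indep E I"
      hence "insert b F = F" using maxD2[OF hF] by blast
      thus False using bF by blast
    qed
    have "insert b F \<subseteq> E" using bE FE by blast
    then obtain C where C: "C \<subseteq> insert b F" "finite C" "C \<notin> I"
      using notfin unfolding fin_indep_def by blast
    have C1: "C - {b} \<in> I" using FI C unfolding fin_indep_def by blast
    have bC: "b \<in> C"
    proof (rule ccontr)
      assume "b \<notin> C"
      hence "C - {b} = C" by simp
      thus False using C C1 by simp
    qed
    define X where "X = S \<union> C"
    have XE: "X \<subseteq> E" unfolding X_def using S FE C bE by blast
    obtain W where W: "C - {b} \<subseteq> W" "W \<subseteq> X" and Wmax: "maximal_in {J \<in> I. J \<subseteq> X} W"
      using m_ext[OF M C1 _ XE] unfolding X_def by blast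
    have bW: "b \<notin> W"
    proof
      assume "b \<in> W"
      hence "C \<subseteq> W" using W by blast
      hence "C \<in> I" using m_down[OF M maxR1[OF Wmax]] by blast
      thus False using C by blast
    qed
    have Snmax: "\<not> maximal_in {J \<in> I. J \<subseteq> X} S"
    proof
      assume sm: "maximal_in {J \<in> I. J \<subseteq> X} S"
      have "insert b S \<subseteq> X" unfolding X_def using bC by blast
      hence "insert b S = S" using maxR3[OF sm b(2)] by blast
      thus False using b by blast
    qed
    have SX: "S \<subseteq> X" unfolding X_def by blast
    obtain w where w: "w \<in> W - S" "insert w S \<in> I" using RA[OF M XE Wmax SI SX Snmax] by blast
    have wF: "w \<in> F" using w W bW C unfolding X_def by blast
    have "insert w S \<subseteq> F" using wF S by blast
    hence "insert w S = S" using maxR3[OF Smax w(2)] by blast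
    thus False using w by blast
  qed
  have f1: "finite (F - S)" using NF hF bS S unfolding nearly_finitary_def by blast
  have f2: "finite (S - B')" using LM[OF M hB SI S(1)] .
  have "F - B' \<subseteq> (F - S) \<union> (S - B')" by blast
  thus "finite (F - B')" using f1 f2 finite_subset by blast
qed


lemma goal2:
  assumes M: "matroid E I" and NF: "nearly_finitary E I"
    and NN: "\<forall>n. \<not> n_nearly_finitary n E I"
    and inf: "\<And>B. basis I B \<Longrightarrow> infinite B"
  shows "\<not> n_nearly_finitary n E (trunc k I)"
proof -
  have "\<not> n_nearly_finitary n E I" using NN by simp
  then obtain F B where h: "basis (fin_indep E I) F" "basis I B" "B \<subseteq> F"
      "\<not> (finite (F - B) \<and> card (F - B) \<le> n)"
    unfolding n_nearly_finitary_def by blast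
  have fFB: "finite (F - B)" using NF h unfolding nearly_finitary_def by blast
  hence cFB: "card (F - B) > n" using h(4) by simp
  obtain X where X: "X \<subseteq> B" "finite X" "card X = k"
    using infinite_arbitrarily_large[OF inf[OF h(2)]] by blast
  define B' where "B' = B - X"
  have BI: "B \<in> I" using maxD1[OF h(2)] .
  have B'I: "B' \<in> I" by (rule m_down[OF M BI]) (simp add: B'_def)
  have eBX: "B - B' = X" unfolding B'_def using X by blast
  have ex: "\<exists>T\<in>I. B' \<subseteq> T \<and> finite (T - B') \<and> card (T - B') = k"
  proof (rule bexI[of _ B])
    show "B' \<subseteq> B \<and> finite (B - B') \<and> card (B - B') = k" unfolding eBX using X B'_def by auto
  qed (rule BI)
  have B'tr: "B' \<in> trunc k I" unfolding trunc_def using B'I ex by simp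
  have bB': "basis (trunc k I) B'"
    unfolding maximal_in_def
  proof (intro conjI ballI impI)
    show "B' \<in> trunc k I" by (rule B'tr)
  next
    fix T' assume T': "T' \<in> trunc k I" "B' \<subseteq> T'"
    obtain T'' where T'': "T'' \<in> I" "T' \<subseteq> T''" "finite (T'' - T')" "card (T'' - T') = k"
      using T'(1) unfolding trunc_def by blast
    have sB: "B - X \<subseteq> T''" using T' T'' unfolding B'_def by blast
    have L: "finite (T'' - B') \<and> card (T'' - B') \<le> k"
      using LL[OF M h(2) X(1) X(2) T''(1) sB] X(3) unfolding B'_def by simp
    have eq: "T'' - B' = (T'' - T') \<union> (T' - B')" using T' T'' by blast
    have f2: "finite (T' - B')" using L eq by (metis finite_Un)
    have "card (T'' - B') = card (T'' - T') + card (T' - B')"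
      unfolding eq using T''(3) f2 by (intro card_Un_disjoint) auto
    hence "card (T' - B') = 0" using L T''(4) by simp
    hence "T' - B' = {}" using f2 by simp
    thus "T' = B'" using T'(2) by blast
  qed
  have hF': "basis (fin_indep E (trunc k I)) F" using h(1) fin_eq[OF M inf] by simp
  have sub: "B' \<subseteq> F" using h(3) unfolding B'_def by blast
  have nn: "\<not> (finite (F - B') \<and> card (F - B') \<le> n)"
  proof
    assume a: "finite (F - B') \<and> card (F - B') \<le> n"
    have "F - B \<subseteq> F - B'" unfolding B'_def by blast
    hence "card (F - B) \<le> card (F - B')" using a by (intro card_mono) auto
    thus False using a cFB by simp
  qed
  show ?thesis unfolding n_nearly_finitary_def using hF' bB' sub nn by blast
qed

theorem theorem3p4p5:
  fixes E :: "'a set" and \<I> :: "'a set set" and k :: nat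
  assumes "matroid E \<I>"
    and "nearly_finitary E \<I>"
    and "\<forall>n. \<not> n_nearly_finitary n E \<I>"
  shows "nearly_finitary E (trunc k \<I>) \<and> (\<forall>n. \<not> n_nearly_finitary n E (trunc k \<I>))"
proof -
  have inf: "\<And>B. basis \<I> B \<Longrightarrow> infinite B" using inf_bases[OF assms] .
  show ?thesis using goal1[OF assms(1,2) inf] goal2[OF assms inf] by blast
qed

end
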